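(* Let $p<c\le\overline{c}$. There exists a positive constant $\overline{K}$ such that $$-\frac{c-p}{q}\le J^p_x-J^c_x\le\overline{K}\left[1+\frac1x+\frac{e^{-\frac{1}{1-\alpha}}}{\left(xq(1-\alpha)\right)^{1/(1-\alpha)}}+\frac{x}{(c-p)^{1-\alpha}}\right](c-p)$$ for any $0<\alpha<1$ and $x>0$.
   Context: Cramér–Lundberg model: the uncontrolled surplus is $X_t=x+pt-\sum_{i=1}^{N_t}U_i$, where $x\ge0$ is the initial surplus, $p>0$ the premium rate, $N_t$ a Poisson process with intensity $\beta>0$, and the claims $U_i$ are i.i.d. positive random variables, independent of $N$, with continuous distribution function $F$; $p>\beta\mathbb{E}[U_1]$. Standing assumption (A1): $F$ is globally Lipschitz, $0\le F(y)-F(x)\le K(y-x)$ for $x<y$. Fix $\overline{c}>p$ and a discount rate $q>0$. For a dividend rate process $C$ the controlled surplus is $X^C_t=X_t-\int_0^tC_sds$ with $X_0=x$, the ruin time is $\tau=\inf\{t\ge0:X^C_t<0\}$ and $J(x;C)=\mathbb{E}[\int_0^\tau e^{-qs}C_sds]$. For $y\ge0$ and $c\in[0,\overline{c}]$, $J^c_y$ denotes the value $J(y;C)$ of the strategy $C_t\equiv c$ that pays dividends at the constant rate $c$ until ruin, starting from surplus $y$. *)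

theory Defs
  imports "HOL-Probability.Probability"
begin

text \<open>The Poisson process N with intensity beta is realised
through its i.i.d. exponential(beta) inter-arrival times E 0, E 1, ...;
the n-th arrival time is E 0 + ... + E (n-1), and U i is the size of the (i+1)-th claim.\<close>

definition claim_count :: "(nat \<Rightarrow> 'a \<Rightarrow> real) \<Rightarrow> real \<Rightarrow> 'a \<Rightarrow> nat" where
  "claim_count E t \<omega> = card {n::nat. 1 \<le> n \<and> (\<Sum>i<n. E i \<omega>) \<le> t}"

definition surplus ::
  "real \<Rightarrow> (nat \<Rightarrow> 'a \<Rightarrow> real) \<Rightarrow> (nat \<Rightarrow> 'a \<Rightarrow> real) \<Rightarrow> real \<Rightarrow> real \<Rightarrow> 'a \<Rightarrow> real \<Rightarrow> real" where
  "surplus p E U y c \<omega> t = y + p * t - (\<Sum>i<claim_count E t \<omega>. U i \<omega>) - c * t"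

text \<open>Ruin time (infimum over the empty set is +infinity).\<close>
definition ruin_time ::
  "real \<Rightarrow> (nat \<Rightarrow> 'a \<Rightarrow> real) \<Rightarrow> (nat \<Rightarrow> 'a \<Rightarrow> real) \<Rightarrow> real \<Rightarrow> real \<Rightarrow> 'a \<Rightarrow> ereal" where
  "ruin_time p E U y c \<omega> = Inf {ereal t | t. 0 \<le> t \<and> surplus p E U y c \<omega> t < 0}"

definition J_const ::
  "'a measure \<Rightarrow> real \<Rightarrow> real \<Rightarrow> (nat \<Rightarrow> 'a \<Rightarrow> real) \<Rightarrow> (nat \<Rightarrow> 'a \<Rightarrow> real) \<Rightarrow> real \<Rightarrow> real \<Rightarrow> real" where
  "J_const M p q E U c y = enn2real (\<integral>\<^sup>+ \<omega>. (\<integral>\<^sup>+ s. ennreal (exp (- q * s) * c) *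
      indicator {t. 0 \<le> t \<and> ereal t < ruin_time p E U y c \<omega>} s \<partial>lborel) \<partial>M)"

definition cl_model ::
  "'a measure \<Rightarrow> real \<Rightarrow> real \<Rightarrow> (real \<Rightarrow> real) \<Rightarrow> (nat \<Rightarrow> 'a \<Rightarrow> real) \<Rightarrow> (nat \<Rightarrow> 'a \<Rightarrow> real) \<Rightarrow> bool" where
  "cl_model M p \<beta> F E U \<longleftrightarrow>
     prob_space M \<and> 0 < p \<and> 0 < \<beta> \<and>
     prob_space.indep_vars M (\<lambda>_. borel) (\<lambda>k. case k of Inl i \<Rightarrow> E i | Inr i \<Rightarrow> U i) (UNIV :: (nat + nat) set) \<and>
     (\<forall>i. distributed M lborel (E i) (\<lambda>x. ennreal (exponential_density \<beta> x))) \<and>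
     (\<forall>i y. measure M {\<omega> \<in> space M. U i \<omega> \<le> y} = F y) \<and>
     (\<forall>i. AE \<omega> in M. 0 < U i \<omega>) \<and>
     continuous_on UNIV F \<and>
     ennreal \<beta> * (\<integral>\<^sup>+ \<omega>. ennreal (U 0 \<omega>) \<partial>M) < ennreal p"

end

theory Submission
  imports Defs
begin

lemma nn_integral_subadd:
  assumes g: "g \<in> borel_measurable N" and le: "AE x in N. f x \<le> h x + g x"
  shows "integral\<^sup>N N f \<le> integral\<^sup>N N h + integral\<^sup>N N g"
proof -
  have "integral\<^sup>N N f \<le> integral\<^sup>N N (\<lambda>x. h x + g x)"
    by (rule nn_integral_mono_AE) (use le in auto)
  also have "\<dots> \<le> integral\<^sup>N N h + integral\<^sup>N N g"
    unfolding nn_integral_def[of N "\<lambda>x. h x + g x"]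
  proof (rule SUP_least)
    fix s assume "s \<in> {s. simple_function N s \<and> s \<le> (\<lambda>x. h x + g x)}"
    then have sf: "simple_function N s" and sle: "\<And>x. s x \<le> h x + g x" by (auto simp: le_fun_def)
    have sm: "s \<in> borel_measurable N" using sf by (rule borel_measurable_simple_function)
    define d where "d x = (if g x = \<top> then 0 else s x - g x)" for x
    have dm: "d \<in> borel_measurable N" unfolding d_def using sm g by measurable
    have "integral\<^sup>S N s = integral\<^sup>N N s" using nn_integral_eq_simple_integral[OF sf] by simp
    also have "\<dots> \<le> integral\<^sup>N N (\<lambda>x. d x + g x)"
      by (rule nn_integral_mono) (auto simp: d_def, metis diff_add_self_ennreal linear order_refl add.commute le_iff_add)
    also have "\<dots> = integral\<^sup>N N d + integral\<^sup>N N g"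
      by (rule nn_integral_add) (use dm g in auto)
    also have "\<dots> \<le> integral\<^sup>N N h + integral\<^sup>N N g"
    proof (rule add_right_mono, rule nn_integral_mono)
      fix x show "d x \<le> h x" using sle[of x]
        by (auto simp add: d_def ennreal_minus_le_iff add.commute)
    qed
    finally show "integral\<^sup>S N s \<le> integral\<^sup>N N h + integral\<^sup>N N g" .
  qed
  finally show ?thesis .
qed


lemma ennreal_le_suminf: "(f n :: ennreal) \<le> (\<Sum>n. f n)"
proof -
  have "sum f {n} \<le> suminf f" by (rule sum_le_suminf) auto
  then show ?thesis by simp
qed

lemma cc_le:
  assumes E: "\<And>i. 0 \<le> E i \<omega>" and pos: "0 < claim_count E t \<omega>"
  shows "(\<Sum>i<claim_count E t \<omega>. E i \<omega>) \<le> t"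
proof -
  define A where "A = {n::nat. 1 \<le> n \<and> (\<Sum>i<n. E i \<omega>) \<le> t}"
  have cA: "claim_count E t \<omega> = card A" by (simp add: claim_count_def A_def)
  with pos have fin: "finite A" and ne: "A \<noteq> {}" by (auto intro: card_ge_0_finite)
  define N where "N = Max A"
  have NA: "N \<in> A" using fin ne by (simp add: N_def)
  have "A = {1..N}"
  proof
    show "A \<subseteq> {1..N}" using fin by (auto simp: N_def A_def)
    show "{1..N} \<subseteq> A"
    proof
      fix k assume k: "k \<in> {1..N}"
      have "(\<Sum>i<k. E i \<omega>) \<le> (\<Sum>i<N. E i \<omega>)"
        by (rule sum_mono2) (use k E in auto)
      with NA k show "k \<in> A" by (auto simp: A_def)
    qed
  qed
  then have "card A = N" by simp
  with NA cA show ?thesis by (simp add: A_def)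
qed

lemma ruin_le:
  "0 \<le> t \<Longrightarrow> surplus p E U y c \<omega> t < 0 \<Longrightarrow> ruin_time p E U y c \<omega> \<le> ereal t"
  unfolding ruin_time_def by (rule Inf_lower) auto

lemma ruin_ge0: "0 \<le> ruin_time p E U y c \<omega>"
  unfolding ruin_time_def by (rule Inf_greatest) auto

lemma ruin_mono:
  assumes "p \<le> c" shows "ruin_time p E U y c \<omega> \<le> ruin_time p E U y p \<omega>"
  unfolding ruin_time_def
proof (rule Inf_superset_mono, safe)
  fix t assume t: "0 \<le> t" "surplus p E U y p \<omega> t < 0"
  have "surplus p E U y c \<omega> t \<le> surplus p E U y p \<omega> t"
    using assms t(1) by (simp add: surplus_def mult_right_mono)
  with t show "\<exists>ta. ereal t = ereal ta \<and> 0 \<le> ta \<and> surplus p E U y c \<omega> ta < 0" by auto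
qed

definition Gf :: "real \<Rightarrow> real \<Rightarrow> real \<Rightarrow> (nat \<Rightarrow> 'a \<Rightarrow> real) \<Rightarrow> (nat \<Rightarrow> 'a \<Rightarrow> real) \<Rightarrow> 'a \<Rightarrow> ennreal" where
  "Gf q d x E U \<omega> = (\<Sum>m. ennreal (exp (- q * (\<Sum>i<m. E i \<omega>) / 2) *
      (if (\<Sum>i<m. U i \<omega>) \<le> x then exp (- q * (x - (\<Sum>i<m. U i \<omega>)) / (2 * d)) else 0)))"

lemma P3:
  assumes E: "\<And>i. 0 \<le> E i \<omega>" and pc: "p < c" and q: "0 < q"
    and t: "0 \<le> t" "surplus p E U x c \<omega> t < 0" "ereal t < ruin_time p E U x p \<omega>"
  shows "ennreal (exp (- q * t)) \<le> Gf q (c - p) x E U \<omega>"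
proof -
  define m where "m = claim_count E t \<omega>"
  define Tm where "Tm = (\<Sum>i<m. E i \<omega>)"
  define Sm where "Sm = (\<Sum>i<m. U i \<omega>)"
  have Tm: "Tm \<le> t"
  proof (cases "m = 0")
    case True then show ?thesis using t by (simp add: Tm_def)
  next
    case False then show ?thesis using cc_le[of E \<omega> t] E by (simp add: Tm_def m_def)
  qed
  have "\<not> surplus p E U x p \<omega> t < 0"
    using ruin_le[OF t(1), of p E U x p \<omega>] t(3) by auto
  then have Sx: "Sm \<le> x" by (simp add: surplus_def Sm_def m_def)
  have Sc: "x - Sm < (c - p) * t" using t(2) by (simp add: surplus_def Sm_def m_def algebra_simps)
  have d: "0 < c - p" using pc by simp
  have "q * (x - Sm) / (2 * (c - p)) \<le> q * t / 2"
  proof -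
    have "(x - Sm) / (c - p) \<le> t" using Sc d by (simp add: divide_le_eq mult.commute)
    then have "q * ((x - Sm) / (c - p)) \<le> q * t" using q by (intro mult_left_mono) auto
    moreover have "q * (x - Sm) / (2 * (c - p)) = (q * ((x - Sm) / (c - p))) / 2" by simp
    ultimately show ?thesis by (metis divide_right_mono zero_le_numeral)
  qed
  moreover have "q * Tm / 2 \<le> q * t / 2" using Tm q by simp
  ultimately have "- q * t \<le> - q * Tm / 2 + - q * (x - Sm) / (2 * (c - p))" by linarith
  then have "exp (- q * t) \<le> exp (- q * Tm / 2) * exp (- q * (x - Sm) / (2 * (c - p)))"
    by (simp add: exp_add[symmetric])
  also have "\<dots> = exp (- q * Tm / 2) * (if Sm \<le> x then exp (- q * (x - Sm) / (2 * (c - p))) else 0)"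
    using Sx by simp
  finally have "ennreal (exp (- q * t)) \<le> ennreal (exp (- q * Tm / 2) * (if Sm \<le> x then exp (- q * (x - Sm) / (2 * (c - p))) else 0))"
    by (rule ennreal_leI)
  also have "\<dots> \<le> Gf q (c - p) x E U \<omega>"
    unfolding Gf_def Tm_def Sm_def by (rule ennreal_le_suminf)
  finally show ?thesis .
qed


lemma P4:
  assumes E: "\<And>i. 0 \<le> E i \<omega>" and pc: "p < c" and q: "0 < q"
    and lt: "ruin_time p E U x c \<omega> < ruin_time p E U x p \<omega>"
  shows "ennreal (exp (- q * real_of_ereal (ruin_time p E U x c \<omega>))) \<le> Gf q (c - p) x E U \<omega>"
proof (rule ccontr)
  let ?tc = "ruin_time p E U x c \<omega>" and ?tp = "ruin_time p E U x p \<omega>"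
  let ?G = "Gf q (c - p) x E U \<omega>"
  assume "\<not> ?thesis"
  then have Glt: "?G < ennreal (exp (- q * real_of_ereal ?tc))" by simp
  have tc0: "0 \<le> ?tc" by (rule ruin_ge0)
  have tcfin: "?tc \<noteq> \<infinity>" using lt by auto
  then obtain r where r: "?tc = ereal r" using tc0 by (cases ?tc) auto
  have r0: "0 \<le> r" using tc0 r by simp
  have "?G \<noteq> \<top>" using Glt by (auto simp: top_unique)
  then obtain g where g: "?G = ennreal g" "0 \<le> g" by (cases ?G) auto
  have gl: "g < exp (- q * r)" using Glt g r by (simp add: ennreal_less_iff)
  define u where "u = (if 0 < g then - ln g / q else r + 1)"
  have ru: "r < u"
  proof (cases "0 < g")
    case True
    then have "ln g < - q * r" using gl by (metis ln_exp ln_less_cancel_iff exp_gt_zero)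
    then have "q * r < - ln g" by simp
    then have "r < (- ln g) / q" using q by (subst pos_less_divide_eq[OF q]) (simp add: mult.commute)
    then show ?thesis using True by (simp add: u_def)
  qed (simp add: u_def)
  define v where "v = (if ?tp = \<infinity> then r + 1 else real_of_ereal ?tp)"
  have rv: "r < v"
  proof (cases "?tp = \<infinity>")
    case False
    have "?tp \<noteq> - \<infinity>" using ruin_ge0[of p E U x p \<omega>] by auto
    with False obtain w where "?tp = ereal w" by (cases ?tp) auto
    then show ?thesis using lt r False by (simp add: v_def)
  qed (simp add: v_def)
  have vtp: "\<And>s. s < v \<Longrightarrow> ereal s < ?tp"
  proof -
    fix s assume s: "s < v"
    show "ereal s < ?tp"
    proof (cases "?tp = \<infinity>")
      case False
      have "?tp \<noteq> - \<infinity>" using ruin_ge0[of p E U x p \<omega>] by auto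
      with False obtain w where "?tp = ereal w" by (cases ?tp) auto
      then show ?thesis using s False by (simp add: v_def)
    qed simp
  qed
  define t' where "t' = (r + min u v) / 2"
  have t': "r < t'" "t' < u" "t' < v" using ru rv by (auto simp: t'_def)
  have "?tc < ereal t'" using r t' by simp
  then obtain a where a: "a \<in> {ereal t |t. 0 \<le> t \<and> surplus p E U x c \<omega> t < 0}" "a < ereal t'"
    unfolding ruin_time_def by (auto simp: Inf_less_iff)
  then obtain t where t: "a = ereal t" "0 \<le> t" "surplus p E U x c \<omega> t < 0" by auto
  have tt': "t < t'" using a t by simp
  have "ereal t < ?tp" using vtp[of t] tt' t' by simp
  then have "ennreal (exp (- q * t)) \<le> ?G" using P3[OF E pc q t(2) t(3)] by simp
  then have e1: "exp (- q * t) \<le> g" using g by (simp add: ennreal_le_iff2)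
  have e2: "exp (- q * t') \<le> exp (- q * t)" using tt' q by simp
  have e3: "g < exp (- q * t')"
  proof (cases "0 < g")
    case True
    then have "t' < (- ln g) / q" using t' by (simp add: u_def)
    then have "q * t' < - ln g" using q by (subst (asm) pos_less_divide_eq[OF q]) (simp add: mult.commute)
    then have "ln g < - q * t'" by simp
    then show ?thesis using True by (metis exp_less_cancel_iff exp_ln)
  next
    case False then show ?thesis using g by simp
  qed
  show False using e1 e2 e3 by linarith
qed


lemma exp_tail_integral:
  assumes a: "0 < a"
  shows "(\<integral>\<^sup>+ s. ennreal (exp (- a * s)) * indicator {c..} s \<partial>lborel) = ennreal (exp (- a * c) / a)"
  by (rule nn_integral_has_integral_lebesgue'[OF _ has_integral_exp_minus_to_infinity[OF a]]) auto

definition Iin where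
  "Iin p q E U x c \<omega> = (\<integral>\<^sup>+ s. ennreal (exp (- q * s) * c) *
      indicator {t. 0 \<le> t \<and> ereal t < ruin_time p E U x c \<omega>} s \<partial>lborel)"

lemma P5:
  assumes E: "\<And>i. 0 \<le> E i \<omega>" and pc: "p < c" and q: "0 < q" and p: "0 < p"
  shows "Iin p q E U x p \<omega> \<le> Iin p q E U x c \<omega> + ennreal (p / q) * Gf q (c - p) x E U \<omega>"
proof -
  let ?tc = "ruin_time p E U x c \<omega>" and ?tp = "ruin_time p E U x p \<omega>"
  define g where "g s = ennreal (exp (- q * s) * p) * indicator {s. ?tc \<le> ereal s \<and> ereal s < ?tp} s" for s
  have gm: "g \<in> borel_measurable lborel" unfolding g_def by measurable
  have mono: "?tc \<le> ?tp" using ruin_mono[of p c] pc by simp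
  have tc0: "0 \<le> ?tc" by (rule ruin_ge0)
  have "Iin p q E U x p \<omega> \<le> Iin p q E U x c \<omega> + integral\<^sup>N lborel g"
    unfolding Iin_def
  proof (rule nn_integral_subadd[OF gm], rule AE_I2)
    fix s
    show "ennreal (exp (- q * s) * p) * indicator {t. 0 \<le> t \<and> ereal t < ?tp} s \<le>
          ennreal (exp (- q * s) * c) * indicator {t. 0 \<le> t \<and> ereal t < ?tc} s + g s"
    proof (cases "0 \<le> s \<and> ereal s < ?tp")
      case True
      show ?thesis
      proof (cases "ereal s < ?tc")
        case True2: True
        have "ennreal (exp (- q * s) * p) \<le> ennreal (exp (- q * s) * c)"
          using pc by (intro ennreal_leI) simp
        then show ?thesis using True True2 by (simp add: g_def add_increasing2)
      next
        case False
        then show ?thesis using True by (simp add: g_def not_less)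
      qed
    qed simp
  qed
  also have "integral\<^sup>N lborel g \<le> ennreal (p / q) * Gf q (c - p) x E U \<omega>"
  proof (cases "?tc < ?tp")
    case False
    then have "g = (\<lambda>s. 0)" by (auto simp: g_def indicator_def fun_eq_iff)
    then show ?thesis by simp
  next
    case True
    have "?tc \<noteq> \<infinity>" using True by auto
    then obtain r where r: "?tc = ereal r" using tc0 by (cases ?tc) auto
    have "integral\<^sup>N lborel g \<le> (\<integral>\<^sup>+ s. ennreal p * (ennreal (exp (- q * s)) * indicator {r..} s) \<partial>lborel)"
      using p by (intro nn_integral_mono) (auto simp: g_def r indicator_def ennreal_mult mult.commute)
    also have "\<dots> = ennreal p * ennreal (exp (- q * r) / q)"
      by (subst nn_integral_cmult, measurable, subst exp_tail_integral[OF q], rule refl)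
    also have "\<dots> = ennreal (p / q) * ennreal (exp (- q * real_of_ereal ?tc))"
      using p q by (simp add: r ennreal_mult'[symmetric])
    also have "\<dots> \<le> ennreal (p / q) * Gf q (c - p) x E U \<omega>"
      by (intro mult_left_mono P4[OF E pc q True]) simp
    finally show ?thesis .
  qed
  finally show ?thesis by (simp add: add_left_mono)
qed

lemma P6:
  assumes pc: "p < c" and q: "0 < q" and p: "0 < p"
  shows "Iin p q E U x c \<omega> \<le> Iin p q E U x p \<omega> + ennreal ((c - p) / q)"
proof -
  let ?tc = "ruin_time p E U x c \<omega>" and ?tp = "ruin_time p E U x p \<omega>"
  define g where "g s = ennreal (exp (- q * s) * (c - p)) * indicator {0..} s" for s
  have gm: "g \<in> borel_measurable lborel" unfolding g_def by measurable
  have mono: "?tc \<le> ?tp" using ruin_mono[of p c] pc by simp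
  have "Iin p q E U x c \<omega> \<le> Iin p q E U x p \<omega> + integral\<^sup>N lborel g"
    unfolding Iin_def
  proof (rule nn_integral_subadd[OF gm], rule AE_I2)
    fix s
    show "ennreal (exp (- q * s) * c) * indicator {t. 0 \<le> t \<and> ereal t < ?tc} s \<le>
          ennreal (exp (- q * s) * p) * indicator {t. 0 \<le> t \<and> ereal t < ?tp} s + g s"
    proof (cases "0 \<le> s \<and> ereal s < ?tc")
      case True
      then have "ereal s < ?tp" using mono by (meson less_le_trans)
      moreover have "ennreal (exp (- q * s) * c) = ennreal (exp (- q * s) * p) + ennreal (exp (- q * s) * (c - p))"
        using pc p by (subst ennreal_plus[symmetric]) (auto simp: algebra_simps)
      ultimately show ?thesis using True by (simp add: g_def)
    qed auto
  qed
  also have "integral\<^sup>N lborel g = ennreal (c - p) * ennreal (exp (- q * 0) / q)"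
    unfolding g_def using pc
    by (subst exp_tail_integral[OF q, symmetric], subst nn_integral_cmult[symmetric])
       (auto intro!: nn_integral_cong simp: ennreal_mult' mult.commute mult.left_commute)
  also have "\<dots> = ennreal ((c - p) / q)" using pc q by (simp add: ennreal_mult'[symmetric])
  finally show ?thesis .
qed


locale clm =
  fixes M :: "'a measure" and p \<beta> :: real and F :: "real \<Rightarrow> real" and E U :: "nat \<Rightarrow> 'a \<Rightarrow> real" and K :: real
  assumes model: "cl_model M p \<beta> F E U"
    and A1: "\<And>x y. x < y \<Longrightarrow> 0 \<le> F y - F x \<and> F y - F x \<le> K * (y - x)"
begin

sublocale prob_space M using model by (simp add: cl_model_def)

definition "X k = (case k of Inl i \<Rightarrow> E i | Inr i \<Rightarrow> U i)"

lemma p_pos: "0 < p" and beta_pos: "0 < \<beta>" using model by (auto simp: cl_model_def)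

lemma indepX: "indep_vars (\<lambda>_. borel) X UNIV"
  using model by (simp add: cl_model_def X_def[abs_def])

lemma Edist: "distributed M lborel (E i) (\<lambda>x. ennreal (exponential_density \<beta> x))"
  using model by (simp add: cl_model_def)

lemma Fdef: "measure M {\<omega> \<in> space M. U i \<omega> \<le> y} = F y"
  using model by (simp add: cl_model_def)

lemma X_meas[measurable]: "X k \<in> borel_measurable M"
  using indepX by (auto simp: indep_vars_def)

lemma E_meas[measurable]: "E i \<in> borel_measurable M"
  using X_meas[of "Inl i"] by (simp add: X_def)

lemma U_meas[measurable]: "U i \<in> borel_measurable M"
  using X_meas[of "Inr i"] by (simp add: X_def)

lemma K_nonneg: "0 \<le> K"
  using A1[of 0 1] by simp

lemma AE_E: "AE \<omega> in M. \<forall>i. 0 \<le> E i \<omega>"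
proof (subst AE_all_countable, intro allI)
  fix i
  have "(AE \<omega> in M. 0 \<le> E i \<omega>) \<longleftrightarrow> (AE x in lborel. 0 < ennreal (exponential_density \<beta> x) \<longrightarrow> 0 \<le> x)"
    by (rule distributed_AE2[OF Edist]) measurable
  also have "\<dots>" by (auto simp: exponential_density_def)
  finally show "AE \<omega> in M. 0 \<le> E i \<omega>" .
qed

lemma E_mgf:
  assumes a: "0 < a"
  shows "(\<integral>\<^sup>+ \<omega>. ennreal (exp (- a * E i \<omega>)) \<partial>M) = ennreal (\<beta> / (\<beta> + a))"
proof -
  have "(\<integral>\<^sup>+ \<omega>. ennreal (exp (- a * E i \<omega>)) \<partial>M) =
        (\<integral>\<^sup>+ x. ennreal (exponential_density \<beta> x) * ennreal (exp (- a * x)) \<partial>lborel)"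
    by (rule distributed_nn_integral[OF Edist, symmetric]) measurable
  also have "\<dots> = (\<integral>\<^sup>+ x. ennreal \<beta> * (ennreal (exp (- (\<beta> + a) * x)) * indicator {0..} x) \<partial>lborel)"
    using beta_pos
    by (intro nn_integral_cong) (auto simp: exponential_density_def indicator_def ennreal_mult[symmetric]
        exp_add[symmetric] algebra_simps)
  also have "\<dots> = ennreal \<beta> * ennreal (exp (- (\<beta> + a) * 0) / (\<beta> + a))"
    using a beta_pos
    by (subst nn_integral_cmult, measurable, subst exp_tail_integral, simp_all)
  also have "\<dots> = ennreal (\<beta> / (\<beta> + a))"
    using a beta_pos by (simp add: ennreal_mult[symmetric])
  finally show ?thesis .
qed

lemma T_mgf:
  assumes a: "0 < a"
  shows "(\<integral>\<^sup>+ \<omega>. ennreal (exp (- a * (\<Sum>i<n. E i \<omega>))) \<partial>M) = ennreal ((\<beta> / (\<beta> + a)) ^ n)"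
proof -
  define Y where "Y k \<omega> = ennreal (exp (- a * X k \<omega>))" for k \<omega>
  have indY: "indep_vars (\<lambda>_. borel) Y (Inl ` {..<n})"
    unfolding Y_def
    by (rule indep_vars_compose2[where M'="\<lambda>_. borel", OF indep_vars_subset[OF indepX]]) auto
  have "(\<integral>\<^sup>+ \<omega>. ennreal (exp (- a * (\<Sum>i<n. E i \<omega>))) \<partial>M) = (\<integral>\<^sup>+ \<omega>. (\<Prod>k\<in>Inl ` {..<n}. Y k \<omega>) \<partial>M)"
  proof (rule nn_integral_cong)
    fix \<omega>
    have "(\<Prod>k\<in>Inl ` {..<n}. Y k \<omega>) = (\<Prod>i<n. ennreal (exp (- a * E i \<omega>)))"
      by (subst prod.reindex) (auto simp: Y_def X_def)
    also have "\<dots> = ennreal (\<Prod>i<n. exp (- a * E i \<omega>))" by (simp add: prod_ennreal)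
    also have "\<dots> = exp (- a * (\<Sum>i<n. E i \<omega>))"
      by (simp add: exp_sum[symmetric] sum_distrib_left sum_negf)
    finally show "ennreal (exp (- a * (\<Sum>i<n. E i \<omega>))) = (\<Prod>k\<in>Inl ` {..<n}. Y k \<omega>)" by simp
  qed
  also have "\<dots> = (\<Prod>k\<in>Inl ` {..<n}. \<integral>\<^sup>+ \<omega>. Y k \<omega> \<partial>M)"
    by (rule indep_vars_nn_integral) (use indY in auto)
  also have "\<dots> = (\<Prod>i<n. ennreal (\<beta> / (\<beta> + a)))"
    using E_mgf[OF a] by (subst prod.reindex) (auto simp: Y_def[abs_def] X_def)
  also have "\<dots> = ennreal ((\<beta> / (\<beta> + a)) ^ n)"
    using a beta_pos by (simp add: ennreal_power prod_ennreal)
  finally show ?thesis .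
qed

end

lemma (in prob_space) indep_bound:
  fixes a :: "'b \<Rightarrow> ennreal" and b :: "'b \<times> 'b \<Rightarrow> ennreal" and Z :: "'a \<Rightarrow> 'b"
  assumes ind: "indep_var N Y N2 Z" and am[measurable]: "a \<in> borel_measurable N"
    and bm[measurable]: "b \<in> borel_measurable (N \<Otimes>\<^sub>M N2)"
    and bound: "\<And>y. y \<in> space N \<Longrightarrow> (\<integral>\<^sup>+\<omega>. b (y, Z \<omega>) \<partial>M) \<le> B"
  shows "(\<integral>\<^sup>+\<omega>. a (Y \<omega>) * b (Y \<omega>, Z \<omega>) \<partial>M) \<le> B * (\<integral>\<^sup>+\<omega>. a (Y \<omega>) \<partial>M)"
proof -
  have rvY[measurable]: "Y \<in> measurable M N" using indep_var_rv1[OF ind] .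
  have rvZ[measurable]: "Z \<in> measurable M N2" using indep_var_rv2[OF ind] .
  have eq: "distr M N Y \<Otimes>\<^sub>M distr M N2 Z = distr M (N \<Otimes>\<^sub>M N2) (\<lambda>x. (Y x, Z x))"
    using ind by (simp add: indep_var_distribution_eq)
  interpret PZ: prob_space "distr M N2 Z" by (rule prob_space_distr) simp
  have "(\<integral>\<^sup>+\<omega>. a (Y \<omega>) * b (Y \<omega>, Z \<omega>) \<partial>M) =
        (\<integral>\<^sup>+w. a (fst w) * b w \<partial>distr M (N \<Otimes>\<^sub>M N2) (\<lambda>x. (Y x, Z x)))"
    by (subst nn_integral_distr) auto
  also have "\<dots> = (\<integral>\<^sup>+w. a (fst w) * b w \<partial>(distr M N Y \<Otimes>\<^sub>M distr M N2 Z))"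
    by (simp add: eq)
  also have "\<dots> = (\<integral>\<^sup>+ y. \<integral>\<^sup>+ z. a y * b (y, z) \<partial>distr M N2 Z \<partial>distr M N Y)"
    by (subst PZ.nn_integral_fst[symmetric]) (auto simp: measurable_distr_eq1 measurable_distr_eq2)
  also have "\<dots> \<le> (\<integral>\<^sup>+ y. a y * B \<partial>distr M N Y)"
  proof (rule nn_integral_mono)
    fix y assume "y \<in> space (distr M N Y)"
    then have y: "y \<in> space N" by simp
    have bm2: "(\<lambda>z. b (y, z)) \<in> borel_measurable N2"
      using measurable_Pair2[OF bm y] .
    have "(\<integral>\<^sup>+ z. a y * b (y, z) \<partial>distr M N2 Z) = a y * (\<integral>\<^sup>+ z. b (y, z) \<partial>distr M N2 Z)"
      by (rule nn_integral_cmult) (simp add: bm2)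
    also have "\<dots> = a y * (\<integral>\<^sup>+ \<omega>. b (y, Z \<omega>) \<partial>M)"
      by (subst nn_integral_distr) (auto simp: bm2)
    also have "\<dots> \<le> a y * B" by (intro mult_left_mono bound y) simp
    finally show "(\<integral>\<^sup>+ z. a y * b (y, z) \<partial>distr M N2 Z) \<le> a y * B" .
  qed
  also have "\<dots> = B * (\<integral>\<^sup>+ y. a y \<partial>distr M N Y)"
    by (subst nn_integral_multc) (auto simp: mult.commute)
  also have "\<dots> = B * (\<integral>\<^sup>+\<omega>. a (Y \<omega>) \<partial>M)"
    by (subst nn_integral_distr) auto
  finally show ?thesis .
qed


context clm begin

lemma U_interval:
  assumes "y1 < y2"
  shows "emeasure M {\<omega> \<in> space M. y1 < U i \<omega> \<and> U i \<omega> \<le> y2} \<le> ennreal (K * (y2 - y1))"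
proof -
  have "{\<omega> \<in> space M. y1 < U i \<omega> \<and> U i \<omega> \<le> y2} = {\<omega> \<in> space M. U i \<omega> \<le> y2} - {\<omega> \<in> space M. U i \<omega> \<le> y1}"
    by auto
  then have "measure M {\<omega> \<in> space M. y1 < U i \<omega> \<and> U i \<omega> \<le> y2} = F y2 - F y1"
    using assms by (simp add: finite_measure_Diff Fdef subset_eq)
  then show ?thesis using A1[OF assms] by (simp add: emeasure_eq_measure ennreal_leI)
qed

lemma exp_geom: "(\<Sum>k. exp (- real k)) = 1 / (1 - exp (- 1))" and exp_geom_s: "summable (\<lambda>k. exp (- real k))"
proof -
  have e: "\<And>k. exp (- real k) = exp (- 1) ^ k" by (simp add: exp_of_nat_mult[symmetric])
  show "(\<Sum>k. exp (- real k)) = 1 / (1 - exp (- 1))" unfolding e by (rule suminf_geometric) simp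
  show "summable (\<lambda>k. exp (- real k))" unfolding e by (rule summable_geometric) simp
qed

lemma exp_geom_le: "1 / (1 - exp (- 1::real)) \<le> 2"
proof -
  have "exp (- 1::real) \<le> 1 / 2"
  proof -
    have "2 \<le> exp (1::real)" using exp_ge_add_one_self[of 1] by simp
    then show ?thesis by (simp add: exp_minus field_simps)
  qed
  moreover have "exp (- 1::real) < 1" by simp
  ultimately show ?thesis by (simp add: field_simps)
qed

lemma U_window:
  assumes a: "0 < a"
  shows "(\<integral>\<^sup>+\<omega>. ennreal (if U i \<omega> \<le> y then exp (- a * (y - U i \<omega>)) else 0) \<partial>M) \<le> ennreal (2 * K / a)"
proof -
  define I where "I k = {u. y - (real k + 1) / a < u \<and> u \<le> y - real k / a}" for k :: nat
  have pw: "ennreal (if u \<le> y then exp (- a * (y - u)) else 0) \<le> (\<Sum>k. ennreal (exp (- real k)) * indicator (I k) u)" for u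
  proof (cases "u \<le> y")
    case True
    define k where "k = nat \<lfloor>a * (y - u)\<rfloor>"
    have nn: "0 \<le> a * (y - u)" using True a by simp
    have k1: "real k \<le> a * (y - u)" using nn by (simp add: k_def)
    have k2: "a * (y - u) < real k + 1" using nn by (simp add: k_def)
    have "u \<in> I k"
    proof -
      have "y - (real k + 1) / a < u" using k2 a by (simp add: field_simps)
      moreover have "u \<le> y - real k / a" using k1 a by (simp add: field_simps)
      ultimately show ?thesis by (simp add: I_def)
    qed
    have "ennreal (if u \<le> y then exp (- a * (y - u)) else 0) \<le> ennreal (exp (- real k))"
      using True k1 by (intro ennreal_leI) simp
    also have "\<dots> = ennreal (exp (- real k)) * indicator (I k) u" using \<open>u \<in> I k\<close> by simp
    also have "\<dots> \<le> (\<Sum>k. ennreal (exp (- real k)) * indicator (I k) u)" by (rule ennreal_le_suminf)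
    finally show ?thesis .
  qed simp
  have Im: "\<And>k. I k \<in> sets borel" unfolding I_def by measurable
  have "(\<integral>\<^sup>+\<omega>. ennreal (if U i \<omega> \<le> y then exp (- a * (y - U i \<omega>)) else 0) \<partial>M)
        \<le> (\<integral>\<^sup>+\<omega>. (\<Sum>k. ennreal (exp (- real k)) * indicator (I k) (U i \<omega>)) \<partial>M)"
    by (intro nn_integral_mono pw)
  also have "\<dots> = (\<Sum>k. \<integral>\<^sup>+\<omega>. ennreal (exp (- real k)) * indicator (I k) (U i \<omega>) \<partial>M)"
    by (rule nn_integral_suminf) (use Im in measurable)
  also have "\<dots> \<le> (\<Sum>k. ennreal (exp (- real k) * (K / a)))"
  proof (intro suminf_le allI)
    fix k
    have "(\<integral>\<^sup>+\<omega>. ennreal (exp (- real k)) * indicator (I k) (U i \<omega>) \<partial>M) =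
          ennreal (exp (- real k)) * emeasure M {\<omega> \<in> space M. y - (real k + 1) / a < U i \<omega> \<and> U i \<omega> \<le> y - real k / a}"
    proof -
      have "(\<integral>\<^sup>+\<omega>. ennreal (exp (- real k)) * indicator (I k) (U i \<omega>) \<partial>M) =
            (\<integral>\<^sup>+\<omega>. ennreal (exp (- real k)) * indicator {\<omega> \<in> space M. y - (real k + 1) / a < U i \<omega> \<and> U i \<omega> \<le> y - real k / a} \<omega> \<partial>M)"
        by (intro nn_integral_cong) (auto simp: I_def indicator_def)
      also have "\<dots> = ennreal (exp (- real k)) * emeasure M {\<omega> \<in> space M. y - (real k + 1) / a < U i \<omega> \<and> U i \<omega> \<le> y - real k / a}"
        by (rule nn_integral_cmult_indicator) measurable
      finally show ?thesis .
    qed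
    also have "\<dots> \<le> ennreal (exp (- real k)) * ennreal (K * ((y - real k / a) - (y - (real k + 1) / a)))"
      using a by (intro mult_left_mono U_interval) (auto simp: field_simps)
    also have "\<dots> = ennreal (exp (- real k) * (K / a))"
      using a K_nonneg by (simp add: ennreal_mult[symmetric] field_simps)
    finally show "(\<integral>\<^sup>+\<omega>. ennreal (exp (- real k)) * indicator (I k) (U i \<omega>) \<partial>M) \<le> ennreal (exp (- real k) * (K / a))" .
  qed simp_all
  also have "\<dots> = ennreal (\<Sum>k. exp (- real k) * (K / a))"
    using a K_nonneg by (intro suminf_ennreal2) (auto intro!: summable_mult2 exp_geom_s)
  also have "(\<Sum>k. exp (- real k) * (K / a)) = (K / a) * (1 / (1 - exp (- 1)))"
    by (subst suminf_mult2[symmetric, OF exp_geom_s]) (simp add: exp_geom mult.commute)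
  also have "\<dots> \<le> (K / a) * 2"
    using a K_nonneg exp_geom_le by (intro mult_left_mono) auto
  finally show ?thesis by (simp add: ennreal_leI mult.commute)
qed

end

context clm begin

lemma term_bound:
  assumes q: "0 < q" and d: "0 < d"
  shows "(\<integral>\<^sup>+\<omega>. ennreal (exp (- q * (\<Sum>i<Suc m. E i \<omega>) / 2) *
      (if (\<Sum>i<Suc m. U i \<omega>) \<le> x then exp (- q * (x - (\<Sum>i<Suc m. U i \<omega>)) / (2 * d)) else 0)) \<partial>M)
    \<le> ennreal (4 * K * d / q) * ennreal ((\<beta> / (\<beta> + q / 2)) ^ Suc m)"
proof -
  define A where "A = Inl ` {..<Suc m} \<union> Inr ` {..<m}"
  define N where "N = PiM A (\<lambda>_::nat+nat. (borel :: real measure))"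
  define N2 where "N2 = PiM {Inr m} (\<lambda>_::nat+nat. (borel :: real measure))"
  define Y where "Y \<omega> = restrict (\<lambda>k. X k \<omega>) A" for \<omega>
  define Z where "Z \<omega> = restrict (\<lambda>k. X k \<omega>) {Inr m}" for \<omega>
  have ind: "indep_var N Y N2 Z"
    unfolding N_def N2_def Y_def Z_def
    by (rule indep_var_restrict[OF indepX]) (auto simp: A_def)
  have compN: "\<And>k. k \<in> A \<Longrightarrow> (\<lambda>v. v k) \<in> borel_measurable N"
    unfolding N_def by (rule measurable_component_singleton)
  have compN2: "(\<lambda>v. v (Inr m)) \<in> borel_measurable N2"
    unfolding N2_def by (rule measurable_component_singleton) simp
  define av where "av v = ennreal (exp (- q * (\<Sum>i<Suc m. v (Inl i)) / 2))" for v :: "nat + nat \<Rightarrow> real"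
  define g where "g w = ennreal (if w \<le> x then exp (- q * (x - w) / (2 * d)) else 0)" for w
  define bv where "bv w = g ((\<Sum>i<m. fst w (Inr i)) + snd w (Inr m))" for w :: "(nat + nat \<Rightarrow> real) \<times> (nat + nat \<Rightarrow> real)"
  have gm: "g \<in> borel_measurable borel" unfolding g_def by measurable
  have s1: "(\<lambda>v. \<Sum>i<Suc m. v (Inl i)) \<in> borel_measurable N"
    by (intro borel_measurable_sum compN) (auto simp: A_def)
  have am: "av \<in> borel_measurable N"
    unfolding av_def using s1 by measurable
  have s2: "(\<lambda>w. \<Sum>i<m. fst w (Inr i)) \<in> borel_measurable (N \<Otimes>\<^sub>M N2)"
    by (intro borel_measurable_sum measurable_compose[OF measurable_fst compN]) (auto simp: A_def)
  have s3: "(\<lambda>w. snd w (Inr m)) \<in> borel_measurable (N \<Otimes>\<^sub>M N2)"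
    by (rule measurable_compose[OF measurable_snd compN2])
  have bm: "bv \<in> borel_measurable (N \<Otimes>\<^sub>M N2)"
    unfolding bv_def by (rule measurable_compose[OF _ gm]) (use s2 s3 in measurable)
  have bound: "(\<integral>\<^sup>+\<omega>. bv (v, Z \<omega>) \<partial>M) \<le> ennreal (4 * K * d / q)" if "v \<in> space N" for v
  proof -
    define s where "s = (\<Sum>i<m. v (Inr i))"
    have "(\<integral>\<^sup>+\<omega>. bv (v, Z \<omega>) \<partial>M) =
          (\<integral>\<^sup>+\<omega>. ennreal (if U m \<omega> \<le> x - s then exp (- (q / (2 * d)) * ((x - s) - U m \<omega>)) else 0) \<partial>M)"
      by (intro nn_integral_cong) (auto simp: bv_def g_def Z_def X_def s_def algebra_simps add_divide_distrib[symmetric] diff_divide_distrib[symmetric])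
    also have "\<dots> \<le> ennreal (2 * K / (q / (2 * d)))"
      by (rule U_window) (use q d in simp)
    also have "2 * K / (q / (2 * d)) = 4 * K * d / q" using q d by (simp add: field_simps)
    finally show ?thesis .
  qed
  have "(\<integral>\<^sup>+\<omega>. av (Y \<omega>) * bv (Y \<omega>, Z \<omega>) \<partial>M) \<le> ennreal (4 * K * d / q) * (\<integral>\<^sup>+\<omega>. av (Y \<omega>) \<partial>M)"
    by (rule indep_bound[OF ind am bm]) (use bound in \<open>auto simp: N_def\<close>)
  moreover have "(\<integral>\<^sup>+\<omega>. av (Y \<omega>) \<partial>M) = ennreal ((\<beta> / (\<beta> + q / 2)) ^ Suc m)"
  proof -
    have "(\<integral>\<^sup>+\<omega>. av (Y \<omega>) \<partial>M) = (\<integral>\<^sup>+\<omega>. ennreal (exp (- (q / 2) * (\<Sum>i<Suc m. E i \<omega>))) \<partial>M)"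
      by (intro nn_integral_cong) (auto simp: av_def Y_def X_def A_def)
    also have "\<dots> = ennreal ((\<beta> / (\<beta> + q / 2)) ^ Suc m)"
      by (rule T_mgf) (use q in simp)
    finally show ?thesis .
  qed
  moreover have "(\<integral>\<^sup>+\<omega>. ennreal (exp (- q * (\<Sum>i<Suc m. E i \<omega>) / 2) *
      (if (\<Sum>i<Suc m. U i \<omega>) \<le> x then exp (- q * (x - (\<Sum>i<Suc m. U i \<omega>)) / (2 * d)) else 0)) \<partial>M)
      = (\<integral>\<^sup>+\<omega>. av (Y \<omega>) * bv (Y \<omega>, Z \<omega>) \<partial>M)"
    by (intro nn_integral_cong)
       (auto simp: av_def bv_def g_def Y_def Z_def X_def A_def ennreal_mult[symmetric])
  ultimately show ?thesis by simp
qed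

end

context clm begin

lemma Gf_meas: "Gf q d x E U \<in> borel_measurable M"
  unfolding Gf_def by measurable

lemma Gf_expect:
  assumes q: "0 < q" and d: "0 < d" and x: "0 < x"
  shows "(\<integral>\<^sup>+\<omega>. Gf q d x E U \<omega> \<partial>M) \<le> ennreal (2 * d / (q * x) + 8 * \<beta> * K * d / q\<^sup>2)"
proof -
  define \<rho> where "\<rho> = \<beta> / (\<beta> + q / 2)"
  have \<rho>0: "0 \<le> \<rho>" "\<rho> < 1" using beta_pos q by (auto simp: \<rho>_def)
  define tm where "tm m \<omega> = ennreal (exp (- q * (\<Sum>i<m. E i \<omega>) / 2) *
      (if (\<Sum>i<m. U i \<omega>) \<le> x then exp (- q * (x - (\<Sum>i<m. U i \<omega>)) / (2 * d)) else 0))" for m \<omega>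
  define h where "h m = (if m = 0 then 2 * d / (q * x) else 4 * K * d / q * \<rho> ^ m)" for m
  have h0: "\<And>m. 0 \<le> h m" using q d x K_nonneg \<rho>0 by (auto simp: h_def)
  have hs: "summable h"
  proof -
    have "summable (\<lambda>m. h (Suc m))"
      unfolding h_def using \<rho>0 by (simp add: summable_mult summable_geometric)
    then show ?thesis by (simp add: summable_Suc_iff)
  qed
  have "(\<integral>\<^sup>+\<omega>. Gf q d x E U \<omega> \<partial>M) = (\<Sum>m. \<integral>\<^sup>+\<omega>. tm m \<omega> \<partial>M)"
    unfolding Gf_def tm_def by (rule nn_integral_suminf) measurable
  also have "\<dots> \<le> (\<Sum>m. ennreal (h m))"
  proof (intro suminf_le allI)
    fix m show "(\<integral>\<^sup>+\<omega>. tm m \<omega> \<partial>M) \<le> ennreal (h m)"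
    proof (cases m)
      case 0
      have "(\<integral>\<^sup>+\<omega>. tm m \<omega> \<partial>M) = ennreal (exp (- q * x / (2 * d)))"
        using 0 x by (simp add: tm_def emeasure_space_1)
      also have "\<dots> \<le> ennreal (2 * d / (q * x))"
      proof (rule ennreal_leI)
        define y where "y = q * x / (2 * d)"
        have y0: "0 < y" using q x d by (simp add: y_def)
        have "y < exp y" using exp_ge_add_one_self[of y] by linarith
        then have "exp (- y) < 1 / y" using y0 by (simp add: exp_minus field_simps)
        also have "1 / y = 2 * d / (q * x)" by (simp add: y_def)
        finally show "exp (- q * x / (2 * d)) \<le> 2 * d / (q * x)" by (simp add: y_def)
      qed
      finally show ?thesis using 0 by (simp add: h_def)
    next
      case (Suc k)
      have "(\<integral>\<^sup>+\<omega>. tm m \<omega> \<partial>M) \<le> ennreal (4 * K * d / q) * ennreal ((\<beta> / (\<beta> + q / 2)) ^ Suc k)"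
        unfolding tm_def Suc by (rule term_bound[OF q d])
      also have "\<dots> = ennreal (h m)"
      proof -
        have "0 \<le> 4 * K * d / q" using q d K_nonneg by simp
        then have "ennreal (4 * K * d / q) * ennreal (\<rho> ^ Suc k) = ennreal (4 * K * d / q * \<rho> ^ Suc k)"
          by (rule ennreal_mult'[symmetric])
        then show ?thesis using Suc by (simp only: h_def \<rho>_def) simp
      qed
      finally show ?thesis .
    qed
  qed simp_all
  also have "\<dots> = ennreal (\<Sum>m. h m)" by (rule suminf_ennreal2[OF h0 hs])
  also have "(\<Sum>m. h m) = 2 * d / (q * x) + 8 * \<beta> * K * d / q\<^sup>2"
  proof -
    have "(\<Sum>m. h m) = (\<Sum>m. h (Suc m)) + h 0" using suminf_split_head[OF hs] by simp
    also have "(\<Sum>m. h (Suc m)) = (\<Sum>m. (4 * K * d / q * \<rho>) * \<rho> ^ m)"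
      by (simp add: h_def mult.assoc)
    also have "\<dots> = (4 * K * d / q * \<rho>) * (1 / (1 - \<rho>))"
      using \<rho>0 by (subst suminf_mult) (auto simp: summable_geometric suminf_geometric)
    also have "(4 * K * d / q * \<rho>) * (1 / (1 - \<rho>)) = 8 * \<beta> * K * d / q\<^sup>2"
    proof -
      have pz: "0 < 2 * \<beta> + q" using beta_pos q by simp
      have r1: "\<rho> = 2 * \<beta> / (2 * \<beta> + q)" unfolding \<rho>_def using pz by (simp add: field_simps)
      have r2: "1 - \<rho> = q / (2 * \<beta> + q)" unfolding r1 using pz by (simp add: field_simps)
      have "\<rho> * (1 / (1 - \<rho>)) = 2 * \<beta> / (2 * \<beta> + q) * ((2 * \<beta> + q) / q)"
        by (simp only: r2) (simp add: r1)
      also have "\<dots> = 2 * \<beta> / q" using pz by (simp add: divide_simps)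
      finally have "\<rho> * (1 / (1 - \<rho>)) = 2 * \<beta> / q" .
      then have "(4 * K * d / q * \<rho>) * (1 / (1 - \<rho>)) = 4 * K * d / q * (2 * \<beta> / q)"
        by (simp only: mult.assoc)
      also have "\<dots> = 8 * \<beta> * K * d / q\<^sup>2" using q by (simp add: power2_eq_square)
      finally show ?thesis .
    qed
    finally show ?thesis by (simp add: h_def)
  qed
  finally show ?thesis .
qed

end

lemma enn2real_le_add:
  assumes "a \<le> b + ennreal r" "b < \<top>" "0 \<le> r"
  shows "enn2real a \<le> enn2real b + r"
proof -
  have "a < \<top>" using assms by (metis ennreal_less_top ennreal_add_less_top order_le_less_trans)
  then obtain a' where a: "a = ennreal a'" "0 \<le> a'" by (cases a) auto
  obtain b' where b: "b = ennreal b'" "0 \<le> b'" using assms(2) by (cases b) auto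
  have "ennreal a' \<le> ennreal (b' + r)" using assms(1) a b assms(3) by (simp add: ennreal_plus)
  then have "a' \<le> b' + r" using b assms(3) by (metis ennreal_le_iff add_nonneg_nonneg)
  then show ?thesis using a b by simp
qed

context clm begin

lemma Iin_le: assumes q: "0 < q" and c: "0 \<le> c" shows "Iin p q E U x c \<omega> \<le> ennreal (c / q)"
proof -
  have "Iin p q E U x c \<omega> \<le> (\<integral>\<^sup>+ s. ennreal c * (ennreal (exp (- q * s)) * indicator {0..} s) \<partial>lborel)"
    unfolding Iin_def using c
    by (intro nn_integral_mono) (auto simp: indicator_def ennreal_mult mult.commute)
  also have "\<dots> = ennreal c * ennreal (exp (- q * 0) / q)"
    by (subst nn_integral_cmult, measurable, subst exp_tail_integral[OF q], rule refl)
  also have "\<dots> = ennreal (c / q)" using c q by (simp add: ennreal_mult[symmetric])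
  finally show ?thesis .
qed

lemma J_fin: assumes q: "0 < q" and c: "0 \<le> c" shows "(\<integral>\<^sup>+\<omega>. Iin p q E U x c \<omega> \<partial>M) < \<top>"
proof -
  have "(\<integral>\<^sup>+\<omega>. Iin p q E U x c \<omega> \<partial>M) \<le> (\<integral>\<^sup>+\<omega>. ennreal (c / q) \<partial>M)"
    by (intro nn_integral_mono Iin_le q c)
  also have "\<dots> = ennreal (c / q)" by (simp add: emeasure_space_1)
  finally show ?thesis by (simp add: top_unique order_le_less_trans)
qed

lemma J_eq: "J_const M p q E U c x = enn2real (\<integral>\<^sup>+\<omega>. Iin p q E U x c \<omega> \<partial>M)"
  by (simp add: J_const_def Iin_def)

lemma bound_low:
  assumes pc: "p < c" and q: "0 < q"
  shows "J_const M p q E U c x \<le> J_const M p q E U p x + (c - p) / q"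
proof -
  have "(\<integral>\<^sup>+\<omega>. Iin p q E U x c \<omega> \<partial>M) \<le> (\<integral>\<^sup>+\<omega>. Iin p q E U x p \<omega> \<partial>M) + (\<integral>\<^sup>+\<omega>. ennreal ((c - p) / q) \<partial>M)"
    by (rule nn_integral_subadd) (auto intro!: P6[OF pc q p_pos])
  also have "(\<integral>\<^sup>+\<omega>. ennreal ((c - p) / q) \<partial>M) = ennreal ((c - p) / q)" by (simp add: emeasure_space_1)
  finally show ?thesis unfolding J_eq
    by (rule enn2real_le_add) (use J_fin[OF q] p_pos pc q in auto)
qed

lemma bound_up:
  assumes pc: "p < c" and q: "0 < q" and x: "0 < x"
  shows "J_const M p q E U p x \<le> J_const M p q E U c x +
           (p / q) * (2 * (c - p) / (q * x) + 8 * \<beta> * K * (c - p) / q\<^sup>2)"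
proof -
  let ?d = "c - p"
  have d: "0 < ?d" using pc by simp
  have "(\<integral>\<^sup>+\<omega>. Iin p q E U x p \<omega> \<partial>M) \<le> (\<integral>\<^sup>+\<omega>. Iin p q E U x c \<omega> \<partial>M) + (\<integral>\<^sup>+\<omega>. ennreal (p / q) * Gf q ?d x E U \<omega> \<partial>M)"
  proof (rule nn_integral_subadd)
    show "(\<lambda>\<omega>. ennreal (p / q) * Gf q ?d x E U \<omega>) \<in> borel_measurable M" using Gf_meas by measurable
    show "AE \<omega> in M. Iin p q E U x p \<omega> \<le> Iin p q E U x c \<omega> + ennreal (p / q) * Gf q ?d x E U \<omega>"
      using AE_E by eventually_elim (rule P5[OF _ pc q p_pos], auto)
  qed
  also have "(\<integral>\<^sup>+\<omega>. ennreal (p / q) * Gf q ?d x E U \<omega> \<partial>M) = ennreal (p / q) * (\<integral>\<^sup>+\<omega>. Gf q ?d x E U \<omega> \<partial>M)"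
    by (rule nn_integral_cmult) (rule Gf_meas)
  also have "\<dots> \<le> ennreal (p / q) * ennreal (2 * ?d / (q * x) + 8 * \<beta> * K * ?d / q\<^sup>2)"
    by (intro mult_left_mono Gf_expect[OF q d x]) simp
  also have "\<dots> = ennreal ((p / q) * (2 * ?d / (q * x) + 8 * \<beta> * K * ?d / q\<^sup>2))"
    using p_pos q by (simp add: ennreal_mult'[symmetric])
  finally have "(\<integral>\<^sup>+\<omega>. Iin p q E U x p \<omega> \<partial>M) \<le> (\<integral>\<^sup>+\<omega>. Iin p q E U x c \<omega> \<partial>M) + ennreal ((p / q) * (2 * ?d / (q * x) + 8 * \<beta> * K * ?d / q\<^sup>2))"
    by (simp add: add_left_mono)
  then show ?thesis unfolding J_eq
    by (rule enn2real_le_add) (use J_fin[OF q] p_pos pc q d x K_nonneg beta_pos in auto)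
qed

end
theorem lemma9p6:
  fixes M :: "'a measure" and E U :: "nat \<Rightarrow> 'a \<Rightarrow> real" and F :: "real \<Rightarrow> real"
    and p \<beta> q cbar K :: real
  assumes model: "cl_model M p \<beta> F E U"
    and A1: "\<And>x y. x < y \<Longrightarrow> 0 \<le> F y - F x \<and> F y - F x \<le> K * (y - x)"
    and cbar: "p < cbar" and q: "0 < q"
  shows "\<exists>Kbar > 0. \<forall>c \<alpha> x. p < c \<and> c \<le> cbar \<and> 0 < \<alpha> \<and> \<alpha> < 1 \<and> 0 < x \<longrightarrow>
           - (c - p) / q \<le> J_const M p q E U p x - J_const M p q E U c x \<and>
           J_const M p q E U p x - J_const M p q E U c x \<le>
             Kbar * (1 + 1 / x
                     + exp (- 1 / (1 - \<alpha>)) / (x * q * (1 - \<alpha>)) powr (1 / (1 - \<alpha>))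
                     + x / (c - p) powr (1 - \<alpha>)) * (c - p)"
proof -
  interpret clm M p \<beta> F E U K using model A1 by unfold_locales
  define C1 where "C1 = (p / q) * (2 / q)"
  define C2 where "C2 = (p / q) * (8 * \<beta> * K / q\<^sup>2)"
  define Kbar where "Kbar = C1 + C2 + 1"
  have C1: "0 \<le> C1" using p_pos q by (simp add: C1_def)
  have C2: "0 \<le> C2" using p_pos q beta_pos K_nonneg by (simp add: C2_def)
  show ?thesis
  proof (intro exI[of _ Kbar] conjI allI impI)
    show "0 < Kbar" using C1 C2 by (simp add: Kbar_def)
    fix c \<alpha> x :: real
    assume H: "p < c \<and> c \<le> cbar \<and> 0 < \<alpha> \<and> \<alpha> < 1 \<and> 0 < x"
    then have pc: "p < c" and x: "0 < x" by auto
    show "- (c - p) / q \<le> J_const M p q E U p x - J_const M p q E U c x"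
    proof -
      have "- (c - p) / q = - ((c - p) / q)" by (rule minus_divide_left[symmetric])
      then show ?thesis using bound_low[OF pc q, of x] by linarith
    qed
    define e where "e = exp (- 1 / (1 - \<alpha>)) / (x * q * (1 - \<alpha>)) powr (1 / (1 - \<alpha>))"
    define f where "f = x / (c - p) powr (1 - \<alpha>)"
    have e: "0 \<le> e" unfolding e_def by simp
    have f: "0 \<le> f" unfolding f_def using x by simp
    have d: "0 < c - p" using pc by simp
    have b: "J_const M p q E U p x - J_const M p q E U c x \<le>
           (p / q) * (2 * (c - p) / (q * x) + 8 * \<beta> * K * (c - p) / q\<^sup>2)"
      using bound_up[OF pc q x] by simp
    have eq: "(p / q) * (2 * (c - p) / (q * x) + 8 * \<beta> * K * (c - p) / q\<^sup>2) = (C1 / x + C2) * (c - p)"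
      using x q by (simp add: C1_def C2_def field_simps power2_eq_square)
    have le: "C1 / x + C2 \<le> Kbar * (1 + 1 / x + e + f)"
    proof -
      have "C1 / x \<le> Kbar / x" using C2 x by (intro divide_right_mono) (auto simp: Kbar_def)
      moreover have "C2 \<le> Kbar" using C1 by (simp add: Kbar_def)
      moreover have "0 \<le> Kbar * e + Kbar * f" using e f C1 C2 by (simp add: Kbar_def)
      ultimately show ?thesis by (simp add: distrib_left)
    qed
    have "(C1 / x + C2) * (c - p) \<le> Kbar * (1 + 1 / x + e + f) * (c - p)"
      using le d by (intro mult_right_mono) auto
    then show "J_const M p q E U p x - J_const M p q E U c x \<le>
             Kbar * (1 + 1 / x
                     + exp (- 1 / (1 - \<alpha>)) / (x * q * (1 - \<alpha>)) powr (1 / (1 - \<alpha>))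
                     + x / (c - p) powr (1 - \<alpha>)) * (c - p)"
      using b eq by (simp add: e_def f_def)
  qed
qed

end
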